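(* Let $\omega\in(0,1/2)$ and $1/\{2(1-\omega)\}<\gamma<1$. Then $$\sup_{\mathbf u\in[0,1]^d:\ g(\mathbf u)\ge n^{-\gamma}}\Big|\int_{[0,1]^d}\frac{g(\mathbf w)^\omega}{g(\mathbf u)^\omega}\,\mathrm d\mu_{n,\mathbf u}(\mathbf w)-1\Big|=\mathrm O\{n^{-(1-\gamma)/2}\log n\},\qquad n\to\infty.$$
   Context: $d\ge2$; $g(\mathbf u)=\bigwedge_{j=1}^d\{u_j\wedge\bigvee_{k\ne j}(1-u_k)\}$ for $\mathbf u\in[0,1]^d$ ($\wedge$ = min, $\vee$ = max). For $\mathbf u\in[0,1]^d$, $\mu_{n,\mathbf u}$ is the law of $(S_1/n,\dots,S_d/n)$ with $S_1,\dots,S_d$ independent, $S_j\sim\mathrm{Bin}(n,u_j)$. *)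

theory Defs
  imports "HOL-Probability.Probability"
begin

definition gfun :: "('d::finite \<Rightarrow> real) \<Rightarrow> real" where
  "gfun u = (MIN j. min (u j) (MAX k \<in> UNIV - {j}. 1 - u k))"

definition mu :: "nat \<Rightarrow> ('d::finite \<Rightarrow> real) \<Rightarrow> ('d \<Rightarrow> real) pmf" where
  "mu n u = map_pmf (\<lambda>S j. real (S j) / real n)
              (Pi_pmf UNIV 0 (\<lambda>j. binomial_pmf n (u j)))"

end

theory Submission
  imports Defs
begin


lemma Mx_ge:
  fixes v :: "'d::finite \<Rightarrow> real"
  assumes "k \<noteq> j"
  shows "1 - v k \<le> (MAX k \<in> UNIV - {j}. 1 - v k)"
  using assms by (intro Max_ge) auto

lemma Mx_in:
  fixes v :: "'d::finite \<Rightarrow> real"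
  assumes "CARD('d) \<ge> 2"
  shows "\<exists>k. k \<noteq> j \<and> (MAX k \<in> UNIV - {j}. 1 - v k) = 1 - v k"
proof -
  have "UNIV - {j} \<noteq> {}"
  proof
    assume "UNIV - {j} = {}"
    then have "(UNIV::'d set) = {j}" by auto
    then have "card (UNIV::'d set) = card {j}" by (rule arg_cong)
    then have "CARD('d) = 1" by simp
    with assms show False by simp
  qed
  then have "(MAX k \<in> UNIV - {j}. 1 - v k) \<in> (\<lambda>k. 1 - v k) ` (UNIV - {j})"
    by (intro Max_in) auto
  then show ?thesis by auto
qed

lemma g_le:
  fixes v :: "'d::finite \<Rightarrow> real"
  shows "gfun v \<le> min (v j) (MAX k \<in> UNIV - {j}. 1 - v k)"
  unfolding gfun_def by (intro Min_le) auto

lemma g_in: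
  fixes v :: "'d::finite \<Rightarrow> real"
  shows "\<exists>j. gfun v = min (v j) (MAX k \<in> UNIV - {j}. 1 - v k)"
proof -
  have "gfun v \<in> range (\<lambda>j. min (v j) (MAX k \<in> UNIV - {j}. 1 - v k))"
    unfolding gfun_def by (intro Min_in) auto
  then show ?thesis by auto
qed

definition ee :: "real \<Rightarrow> real \<Rightarrow> real \<Rightarrow> real" where
  "ee p b x = (if p \<le> b \<or> 1 - p \<le> b then \<bar>x - p\<bar> else 0) + max 0 (b - x)
      + (if b \<le> 1 - p then max 0 (b - (1 - x)) else 0)"

lemma ee_nonneg: "ee p b x \<ge> 0"
  unfolding ee_def by auto

lemma g_pointwise:
  fixes u W :: "'d::finite \<Rightarrow> real"
  assumes "CARD('d) \<ge> 2"
  shows "\<bar>gfun W - gfun u\<bar> \<le> (\<Sum>k\<in>UNIV. ee (u k) (gfun u) (W k))"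
proof -
  define b where "b = gfun u"
  have single: "ee (u k) b (W k) \<le> (\<Sum>k\<in>UNIV. ee (u k) b (W k))" for k
    by (rule member_le_sum) (auto simp: ee_nonneg)
  have up: "gfun W - b \<le> (\<Sum>k\<in>UNIV. ee (u k) b (W k))"
  proof -
    obtain j where j: "b = min (u j) (MAX k \<in> UNIV - {j}. 1 - u k)"
      using g_in[of u] b_def by auto
    show ?thesis
    proof (cases "b = u j")
      case True
      have "gfun W \<le> W j" using g_le[of W j] by simp
      moreover have "ee (u j) b (W j) \<ge> \<bar>W j - u j\<bar>"
        using True unfolding ee_def by auto
      ultimately show ?thesis using single[of j] True by linarith
    next
      case False
      then have bM: "b = (MAX k \<in> UNIV - {j}. 1 - u k)" using j by linarith
      obtain k where k: "k \<noteq> j" "(MAX k \<in> UNIV - {j}. 1 - W k) = 1 - W k"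
        using Mx_in[OF assms, of j W] by auto
      have "1 - u k \<le> b" using Mx_ge[OF k(1), of u] bM by simp
      then have "ee (u k) b (W k) \<ge> \<bar>W k - u k\<bar>"
        unfolding ee_def by auto
      moreover have "gfun W \<le> 1 - W k" using g_le[of W j] k by simp
      ultimately show ?thesis using single[of k] \<open>1 - u k \<le> b\<close> by linarith
    qed
  qed
  have lo: "b - gfun W \<le> (\<Sum>k\<in>UNIV. ee (u k) b (W k))"
  proof -
    obtain j where j: "gfun W = min (W j) (MAX k \<in> UNIV - {j}. 1 - W k)"
      using g_in[of W] by auto
    have bj: "b \<le> u j" "b \<le> (MAX k \<in> UNIV - {j}. 1 - u k)"
      using g_le[of u j] b_def by auto
    show ?thesis
    proof (cases "gfun W = W j")
      case True
      have "ee (u j) b (W j) \<ge> max 0 (b - W j)"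
        unfolding ee_def by auto
      then show ?thesis using single[of j] True by linarith
    next
      case False
      then have gM: "gfun W = (MAX k \<in> UNIV - {j}. 1 - W k)" using j by linarith
      obtain k where k: "k \<noteq> j" "(MAX k \<in> UNIV - {j}. 1 - u k) = 1 - u k"
        using Mx_in[OF assms, of j u] by auto
      have "b \<le> 1 - u k" using bj k by simp
      then have "ee (u k) b (W k) \<ge> max 0 (b - (1 - W k))"
        unfolding ee_def by auto
      moreover have "1 - W k \<le> gfun W" using Mx_ge[OF k(1), of W] gM by simp
      ultimately show ?thesis using single[of k] by linarith
    qed
  qed
  show ?thesis unfolding b_def[symmetric] using up lo by linarith
qed


lemma L0:
  fixes M :: "'a pmf" and Y :: "'a \<Rightarrow> real"
  assumes fin: "finite (set_pmf M)" and b: "b > 0" and n: "n > 0"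
    and V: "measure_pmf.expectation M (\<lambda>x. (Y x - q)^2) \<le> 2*b/n"
  shows "measure_pmf.expectation M (\<lambda>x. \<bar>Y x - q\<bar>) \<le> 3/2 * sqrt (b/n)"
proof -
  define t where "t = sqrt (b/n)"
  have t: "t > 0" using b n by (simp add: t_def)
  have tt: "t * t = b/n" using b n by (simp add: t_def)
  have pw: "\<bar>z\<bar> \<le> (z^2/t + t)/2" for z :: real
  proof -
    have "0 \<le> (\<bar>z\<bar> - t)^2" by simp
    then have "2*\<bar>z\<bar>*t \<le> z^2 + t*t" by (simp add: power2_eq_square algebra_simps)
    then show ?thesis using t by (simp add: field_simps power2_eq_square)
  qed
  have "measure_pmf.expectation M (\<lambda>x. \<bar>Y x - q\<bar>) \<le> measure_pmf.expectation M (\<lambda>x. ((Y x - q)^2/t + t)/2)"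
    by (intro integral_mono integrable_measure_pmf_finite fin pw)
  also have "\<dots> = (measure_pmf.expectation M (\<lambda>x. (Y x - q)^2)/t + t)/2"
    using fin by (simp add: integrable_measure_pmf_finite)
  also have "\<dots> \<le> (2*b/n/t + t)/2"
    using V t by (intro divide_right_mono add_right_mono divide_right_mono) auto
  also have "(2*b/n/t + t)/2 = 3/2 * t"
  proof -
    have bb: "b = t*t*n" using tt n by (simp add: field_simps)
    show ?thesis using t n unfolding bb by (simp add: field_simps)
  qed
  finally show ?thesis by (simp add: t_def)
qed

lemma L1:
  fixes M :: "'a pmf" and Y :: "'a \<Rightarrow> real"
  assumes fin: "finite (set_pmf M)" and b: "b > 0" and n: "n > 0" and bq: "b \<le> q"
    and Y0: "\<And>x. x \<in> set_pmf M \<Longrightarrow> Y x \<ge> 0"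
    and V: "measure_pmf.expectation M (\<lambda>x. (Y x - q)^2) \<le> q/n"
  shows "measure_pmf.expectation M (\<lambda>x. max 0 (b - Y x)) \<le> 2 * sqrt (b/n) + 2/n"
proof (cases "q \<le> 2*b")
  case True
  have "measure_pmf.expectation M (\<lambda>x. max 0 (b - Y x)) \<le> measure_pmf.expectation M (\<lambda>x. \<bar>Y x - q\<bar>)"
  proof (intro integral_mono integrable_measure_pmf_finite fin)
    fix x show "max 0 (b - Y x) \<le> \<bar>Y x - q\<bar>" using bq by arith
  qed
  also have "\<dots> \<le> 3/2 * sqrt (b/n)"
  proof (rule L0[OF fin b n])
    have "q/n \<le> 2*b/n" using True n by (intro divide_right_mono) auto
    then show "measure_pmf.expectation M (\<lambda>x. (Y x - q)^2) \<le> 2*b/n" using V by linarith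
  qed
  finally have "measure_pmf.expectation M (\<lambda>x. max 0 (b - Y x)) \<le> 3/2 * sqrt (b/n)" .
  moreover have "sqrt (b/n) \<ge> 0" "2/n > 0" using b n by auto
  ultimately show ?thesis by linarith
next
  case False
  have q: "q > 0" using False b by linarith
  have pw: "max 0 (b - Y x) \<le> 4*b/q^2 * (Y x - q)^2" if "x \<in> set_pmf M" for x
  proof (cases "Y x < b")
    case True
    have "q/2 \<le> q - Y x" using True False by linarith
    then have "(q/2)^2 \<le> (q - Y x)^2" using q by (intro power_mono) auto
    then have "(q/2)^2 \<le> (Y x - q)^2" by (simp add: power2_commute)
    then have "4*b/q^2 * (q/2)^2 \<le> 4*b/q^2 * (Y x - q)^2" using q b by (intro mult_left_mono) auto
    moreover have "4*b/q^2 * (q/2)^2 = b" using q by (simp add: field_simps power2_eq_square)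
    ultimately show ?thesis unfolding max.bounded_iff using Y0[OF that] b by linarith
  next
    case False
    have "0 \<le> 4*b/q^2*(Y x - q)^2" using b q by simp
    then show ?thesis unfolding max.bounded_iff using False by linarith
  qed
  have "measure_pmf.expectation M (\<lambda>x. max 0 (b - Y x)) \<le> measure_pmf.expectation M (\<lambda>x. 4*b/q^2 * (Y x - q)^2)"
    by (intro integral_mono_AE integrable_measure_pmf_finite fin AE_pmfI pw)
  also have "\<dots> = 4*b/q^2 * measure_pmf.expectation M (\<lambda>x. (Y x - q)^2)" by simp
  also have "\<dots> \<le> 4*b/q^2 * (q/n)" by (rule mult_left_mono[OF V]) (use b q in simp)
  also have "\<dots> = (4*b/q)/n" using q by (simp add: field_simps power2_eq_square)
  also have "\<dots> \<le> 2/n"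
  proof -
    have "4*b/q \<le> 2" using False q by (simp add: field_simps)
    then show ?thesis using n by (intro divide_right_mono) auto
  qed
  finally have "measure_pmf.expectation M (\<lambda>x. max 0 (b - Y x)) \<le> 2/n" .
  moreover have "sqrt (b/n) \<ge> 0" using b n by auto
  ultimately show ?thesis by linarith
qed


lemma binom_E_Suc:
  fixes h :: "nat \<Rightarrow> real"
  assumes p: "p \<in> {0..1}"
  shows "measure_pmf.expectation (binomial_pmf (Suc n) p) h =
     p * measure_pmf.expectation (binomial_pmf n p) (\<lambda>k. h (Suc k)) + (1-p) * measure_pmf.expectation (binomial_pmf n p) h" 
proof -
  have eq: "binomial_pmf (Suc n) p = bernoulli_pmf p \<bind> (\<lambda>b. map_pmf (\<lambda>k. (if b then 1 else 0) + k) (binomial_pmf n p))"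
    using p by (simp add: binomial_pmf_Suc map_pmf_def)
  have "measure_pmf.expectation (binomial_pmf (Suc n) p) h = 
     (\<Sum>b\<in>UNIV. pmf (bernoulli_pmf p) b *\<^sub>R measure_pmf.expectation (map_pmf (\<lambda>k. (if b then 1 else 0) + k) (binomial_pmf n p)) h)"
    unfolding eq using p by (intro pmf_expectation_bind) (auto intro!: finite_imageI finite_set_pmf_binomial_pmf)
  also have "\<dots> = p * measure_pmf.expectation (binomial_pmf n p) (\<lambda>k. h (Suc k)) + (1-p) * measure_pmf.expectation (binomial_pmf n p) h"
    using p by (simp add: UNIV_bool)
  finally show ?thesis .
qed

lemma binom_moments:
  assumes p: "p \<in> {0..1}"
  shows "measure_pmf.expectation (binomial_pmf n p) real = n*p \<and>
         measure_pmf.expectation (binomial_pmf n p) (\<lambda>k. real k ^ 2) = n*p*(1-p) + (n*p)^2"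
proof (induction n)
  case 0
  then show ?case using p by (simp add: binomial_pmf_0)
next
  case (Suc n)
  have i1: "measure_pmf.expectation (binomial_pmf n p) (\<lambda>k. real (Suc k)) = n*p + 1"
    using Suc p by (simp add: integral_add)
  have i2: "measure_pmf.expectation (binomial_pmf n p) (\<lambda>k. real (Suc k)^2) = n*p*(1-p) + (n*p)^2 + 2*(n*p) + 1"
  proof -
    have "(\<lambda>k. real (Suc k)^2) = (\<lambda>k. real k ^2 + (2 * real k + 1))"
      by (auto simp: power2_eq_square algebra_simps)
    then show ?thesis using Suc p by (simp add: integral_add)
  qed
  have a: "measure_pmf.expectation (binomial_pmf (Suc n) p) real = p * (n*p+1) + (1-p) * (n*p)"
    using binom_E_Suc[OF p, of n real] i1 Suc by simp
  have b: "measure_pmf.expectation (binomial_pmf (Suc n) p) (\<lambda>k. real k ^ 2) = p * (n*p*(1-p) + (n*p)^2 + 2*(n*p) + 1) + (1-p) * (n*p*(1-p) + (n*p)^2)"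
    using binom_E_Suc[OF p, of n "\<lambda>k. real k ^ 2"] i2 Suc by simp
  show ?case unfolding a b by (simp add: algebra_simps power2_eq_square)
qed
lemma binom_var:
  assumes p: "p \<in> {0..1}" and n: "n > 0"
  shows "measure_pmf.expectation (binomial_pmf n p) (\<lambda>s. (real s / n - p)^2) = p*(1-p)/n"
proof -
  have eq: "(\<lambda>s. (real s / n - p)^2) = (\<lambda>s. (1/n^2) * real s ^ 2 - (2*p/n) * real s + p^2)"
    using n by (auto simp: fun_eq_iff field_simps power2_eq_square)
  have "measure_pmf.expectation (binomial_pmf n p) (\<lambda>s. (real s / n - p)^2)
     = (1/n^2) * (n*p*(1-p) + (n*p)^2) - (2*p/n) * (n*p) + p^2"
    unfolding eq using p binom_moments[OF p, of n] by (simp add: integral_add integral_diff)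
  also have "\<dots> = p*(1-p)/n" using n by (simp add: field_simps power2_eq_square)
  finally show ?thesis .
qed

lemma L2:
  assumes p: "p \<in> {0..1}" and n: "n > 0" and b: "0 < b" "b \<le> p"
  shows "measure_pmf.expectation (binomial_pmf n p) (\<lambda>s. ee p b (real s / n))
     \<le> 6 * (sqrt (b/n) + 1/n)"
proof -
  let ?N = "binomial_pmf n p"
  let ?E = "measure_pmf.expectation ?N"
  have fin: "finite (set_pmf ?N)" using p by auto
  have sup: "s \<le> n" if "s \<in> set_pmf ?N" for s
    using that p by (auto simp: set_pmf_binomial_eq split: if_splits)
  have nr: "real n > 0" using n by simp
  have V: "?E (\<lambda>s. (real s / n - p)^2) = p*(1-p)/n" by (rule binom_var[OF p n])
  have pp: "p*(1-p) \<le> p" "p*(1-p) \<le> 1-p"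
  proof -
    have "0 \<le> (1-p)*(1-p)" "0 \<le> p*p" by simp_all
    then show "p*(1-p) \<le> p" "p*(1-p) \<le> 1-p" by (simp_all add: algebra_simps)
  qed
  have V1: "p*(1-p)/n \<le> p/n" "p*(1-p)/n \<le> (1-p)/n" using pp nr
    by (auto intro!: divide_right_mono)
  have t1: "?E (\<lambda>s. if p \<le> b \<or> 1 - p \<le> b then \<bar>real s / n - p\<bar> else 0) \<le> 3/2 * sqrt (b/n)"
  proof (cases "p \<le> b \<or> 1 - p \<le> b")
    case True
    have "p/n \<le> b/n \<or> (1-p)/n \<le> b/n" using True nr by (auto intro: divide_right_mono)
    then have "p*(1-p)/n \<le> b/n" using V1 by linarith
    also have "\<dots> \<le> 2*b/n" using b nr by (intro divide_right_mono) auto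
    finally have "?E (\<lambda>s. \<bar>real s / n - p\<bar>) \<le> 3/2 * sqrt (b/n)"
      using L0[OF fin b(1) nr, of "\<lambda>s. real s / n" p] V by simp
    then show ?thesis using True by simp
  next
    case False
    then show ?thesis using b nr by simp
  qed
  have t2: "?E (\<lambda>s. max 0 (b - real s / n)) \<le> 2 * sqrt (b/n) + 2/n"
    using L1[OF fin b(1) nr b(2), of "\<lambda>s. real s / n"] V V1 by simp
  have t3: "?E (\<lambda>s. if b \<le> 1 - p then max 0 (b - (1 - real s / n)) else 0) \<le> 2 * sqrt (b/n) + 2/n"
  proof (cases "b \<le> 1 - p")
    case True
    have Y0: "1 - real s / n \<ge> 0" if "s \<in> set_pmf ?N" for s
      using sup[OF that] nr by (simp add: field_simps)
    have "(\<lambda>s. (1 - real s / n - (1 - p))^2) = (\<lambda>s. (real s / n - p)^2)"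
      by (auto simp: fun_eq_iff power2_commute)
    then have "?E (\<lambda>s. (1 - real s / n - (1 - p))^2) \<le> (1-p)/n" using V V1 by simp
    then have "?E (\<lambda>s. max 0 (b - (1 - real s / n))) \<le> 2 * sqrt (b/n) + 2/n"
      using L1[OF fin b(1) nr True, of "\<lambda>s. 1 - real s / n"] Y0 by blast
    then show ?thesis using True by simp
  next
    case False
    then show ?thesis using b nr by simp
  qed
  have "?E (\<lambda>s. ee p b (real s / n)) = 
      ?E (\<lambda>s. if p \<le> b \<or> 1 - p \<le> b then \<bar>real s / n - p\<bar> else 0) + ?E (\<lambda>s. max 0 (b - real s / n))
      + ?E (\<lambda>s. if b \<le> 1 - p then max 0 (b - (1 - real s / n)) else 0)"
    unfolding ee_def using p by (simp add: integral_add)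
  also have "\<dots> \<le> 3/2 * sqrt (b/n) + (2 * sqrt (b/n) + 2/n) + (2 * sqrt (b/n) + 2/n)"
    using t1 t2 t3 by linarith
  also have "\<dots> \<le> 6 * (sqrt (b/n) + 1/n)" using b nr by (simp add: field_simps)
  finally show ?thesis .
qed



lemma powA:
  fixes a b w :: real
  assumes a: "a \<ge> 0" and b: "b > 0" and w: "0 < w" "w < 1"
  shows "\<bar>a powr w / b powr w - 1\<bar> \<le> \<bar>a - b\<bar> / b"
proof -
  define x where "x = a / b"
  have x: "x \<ge> 0" using a b by (simp add: x_def)
  have eq: "a powr w / b powr w = x powr w" using a b by (simp add: x_def powr_divide)
  have e3: "(a-b)/b = x - 1" using b by (simp add: x_def diff_divide_distrib)
  have "\<bar>a - b\<bar> / b = \<bar>(a-b)/b\<bar>" using b by (simp add: abs_divide)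
  then have eq2: "\<bar>a - b\<bar> / b = \<bar>x - 1\<bar>" using e3 by simp
  have "\<bar>x powr w - 1\<bar> \<le> \<bar>x - 1\<bar>"
  proof (cases "x \<ge> 1")
    case True
    have "x powr w \<le> x powr 1" using True w by (intro powr_mono) auto
    moreover have "1 \<le> x powr w" using True w by (simp add: ge_one_powr_ge_zero)
    ultimately show ?thesis using True x by auto
  next
    case False
    show ?thesis
    proof (cases "x = 0")
      case True then show ?thesis by simp
    next
      case False2: False
      have "x powr 1 \<le> x powr w" using False False2 x w by (intro powr_mono') auto
      moreover have "x powr w \<le> 1" using False x w by (intro powr_le1) auto
      ultimately show ?thesis using False x False2 by auto
    qed
  qed
  then show ?thesis using eq eq2 by simp
qed

lemma arithF:
  fixes b \<gamma> :: real and n :: nat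
  assumes n: "n \<ge> 3" and b: "b \<ge> real n powr (-\<gamma>)" and g: "\<gamma> < 1"
  shows "(sqrt (b/n) + 1/n)/b \<le> 2 * real n powr (-(1-\<gamma>)/2)"
proof -
  have nr: "real n \<ge> 3" using n by simp
  have bp: "b > 0" using b nr by (smt (verit) powr_gt_zero)
  define y where "y = real n powr (1-\<gamma>)"
  define t where "t = real n powr (-(1-\<gamma>)/2)"
  have y1: "y \<ge> 1" using g nr unfolding y_def by (intro ge_one_powr_ge_zero) auto
  have ty: "t = 1 / sqrt y"
  proof -
    have m: "-(1-\<gamma>)/2 = -((1-\<gamma>)/2)" by (simp add: field_simps)
    have "sqrt y = y powr (1/2)" using y1 by (simp add: powr_half_sqrt)
    also have "\<dots> = real n powr ((1-\<gamma>)/2)" unfolding y_def by (simp add: powr_powr)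
    finally show ?thesis unfolding t_def m powr_minus_divide by simp
  qed
  have xy: "b * n \<ge> y"
  proof -
    have "b * n \<ge> real n powr (-\<gamma>) * real n" using b nr by (intro mult_right_mono) auto
    also have "real n powr (-\<gamma>) * real n = y"
    proof -
      have "y = real n powr (-\<gamma> + 1)" unfolding y_def by simp
      also have "\<dots> = real n powr (-\<gamma>) * real n powr 1" by (rule powr_add)
      finally show ?thesis using nr by simp
    qed
    finally show ?thesis .
  qed
  have e1: "sqrt (b/n) / b = 1 / sqrt (b*n)"
  proof -
    have "sqrt (b/n) = sqrt b / sqrt n" by (simp add: real_sqrt_divide)
    moreover have "b = sqrt b * sqrt b" using bp by simp
    ultimately show ?thesis using bp nr by (simp add: real_sqrt_mult field_simps)
  qed
  have s1: "1 / sqrt (b*n) \<le> t"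
    unfolding ty using y1 xy by (intro divide_left_mono real_sqrt_le_mono) auto
  have s2: "1 / (b*n) \<le> t"
  proof -
    have "1/(b*n) \<le> 1/y" using y1 xy by (intro divide_left_mono) auto
    also have "1/y \<le> 1/sqrt y"
    proof -
      have s: "1 \<le> sqrt y" using y1 by simp
      have "sqrt y * 1 \<le> sqrt y * sqrt y" by (rule mult_left_mono[OF s]) (use y1 in simp)
      then have "sqrt y \<le> y" using y1 by simp
      then show ?thesis using s by (intro divide_left_mono) auto
    qed
    finally show ?thesis using ty by simp
  qed
  have "(sqrt (b/n) + 1/n)/b = sqrt (b/n)/b + 1/(b*n)" using bp nr by (simp add: field_simps)
  also have "\<dots> \<le> 2 * t" using e1 s1 s2 by simp
  finally show ?thesis unfolding t_def .
qed



lemma mu_marg: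
  fixes h :: "real \<Rightarrow> real"
  shows "measure_pmf.expectation (mu n u) (\<lambda>w. h (w k)) =
         measure_pmf.expectation (binomial_pmf n (u k)) (\<lambda>s. h (real s / real n))"
proof -
  have "measure_pmf.expectation (mu n u) (\<lambda>w. h (w k)) =
        measure_pmf.expectation (Pi_pmf UNIV 0 (\<lambda>j. binomial_pmf n (u j))) (\<lambda>S. h (real (S k) / real n))"
    unfolding mu_def by simp
  also have "\<dots> = measure_pmf.expectation (map_pmf (\<lambda>S. S k) (Pi_pmf UNIV 0 (\<lambda>j. binomial_pmf n (u j)))) (\<lambda>s. h (real s / real n))"
    by simp
  also have "map_pmf (\<lambda>S. S k) (Pi_pmf UNIV 0 (\<lambda>j. binomial_pmf n (u j))) = binomial_pmf n (u k)"
    by (subst Pi_pmf_component) auto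
  finally show ?thesis .
qed

lemma mu_supp:
  assumes n: "n > 0" and u: "\<forall>j. 0 \<le> u j \<and> u j \<le> 1"
  shows "finite (set_pmf (mu n u))" "\<And>w j. w \<in> set_pmf (mu n u) \<Longrightarrow> 0 \<le> w j \<and> w j \<le> 1"
proof -
  have S: "set_pmf (Pi_pmf UNIV 0 (\<lambda>j. binomial_pmf n (u j))) = PiE_dflt UNIV 0 (set_pmf \<circ> (\<lambda>j. binomial_pmf n (u j)))"
    by (rule set_Pi_pmf) simp
  have fin: "finite (PiE_dflt (UNIV::'a set) 0 (set_pmf \<circ> (\<lambda>j. binomial_pmf n (u j))))"
    using u by (intro finite_PiE_dflt) auto
  show "finite (set_pmf (mu n u))" unfolding mu_def using S fin by simp
  fix w j assume "w \<in> set_pmf (mu n u)"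
  then obtain S where Sw: "S \<in> PiE_dflt UNIV 0 (set_pmf \<circ> (\<lambda>j. binomial_pmf n (u j)))" "w = (\<lambda>j. real (S j) / real n)"
    unfolding mu_def using S by auto
  have "S j \<in> set_pmf (binomial_pmf n (u j))" using Sw(1) by (auto simp: PiE_dflt_def)
  then have "S j \<le> n" using u by (auto simp: set_pmf_binomial_eq split: if_splits)
  then show "0 \<le> w j \<and> w j \<le> 1" using Sw(2) n by (simp add: field_simps)
qed


theorem lemma3:
  fixes \<omega> \<gamma> :: real
  assumes "CARD('d::finite) \<ge> 2"
    and "0 < \<omega>" and "\<omega> < 1/2"
    and "1 / (2 * (1 - \<omega>)) < \<gamma>" and "\<gamma> < 1"
  shows "\<exists>C. \<forall>\<^sub>F n in sequentially.
           \<forall>u::'d \<Rightarrow> real. (\<forall>j. 0 \<le> u j \<and> u j \<le> 1) \<and> gfun u \<ge> real n powr (-\<gamma>) \<longrightarrow>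
             \<bar>measure_pmf.expectation (mu n u) (\<lambda>w. gfun w powr \<omega> / gfun u powr \<omega>) - 1\<bar>
               \<le> C * (real n powr (-(1 - \<gamma>) / 2) * ln (real n))"
proof -
  define d where "d = real CARD('d)"
  have main: "\<bar>measure_pmf.expectation (mu n u) (\<lambda>w. gfun w powr \<omega> / gfun u powr \<omega>) - 1\<bar>
               \<le> (12*d) * (real n powr (-(1 - \<gamma>) / 2) * ln (real n))"
    if n: "n \<ge> 3" and u: "\<forall>j. 0 \<le> u j \<and> u j \<le> 1" and gu: "gfun u \<ge> real n powr (-\<gamma>)"
    for n :: nat and u :: "'d \<Rightarrow> real"
  proof -
    define b where "b = gfun u"
    have nr: "real n \<ge> 3" using n by simp
    have n0: "n > 0" using n by simp
    have "real n powr (-\<gamma>) > 0" using nr by simp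
    then have bp: "b > 0" using gu unfolding b_def by linarith
    let ?M = "mu n u"
    let ?E = "measure_pmf.expectation ?M"
    have fin: "finite (set_pmf ?M)" using mu_supp[OF n0 u] by blast
    have supp: "\<And>w j. w \<in> set_pmf ?M \<Longrightarrow> 0 \<le> w j \<and> w j \<le> 1" using mu_supp[OF n0 u] by blast
    have gw0: "gfun w \<ge> 0" if "w \<in> set_pmf ?M" for w
    proof -
      obtain j where j: "gfun w = min (w j) (MAX k \<in> UNIV - {j}. 1 - w k)" using g_in[of w] by auto
      obtain k where k: "(MAX k \<in> UNIV - {j}. 1 - w k) = 1 - w k" using Mx_in[OF assms(1), of j w] by auto
      show ?thesis using j k supp[OF that, of j] supp[OF that, of k] by simp
    qed
    have int: "integrable ?M f" for f :: "_ \<Rightarrow> real" by (rule integrable_measure_pmf_finite[OF fin])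
    have s1: "\<bar>?E (\<lambda>w. gfun w powr \<omega> / b powr \<omega>) - 1\<bar> \<le> ?E (\<lambda>w. \<bar>gfun w powr \<omega> / b powr \<omega> - 1\<bar>)"
    proof -
      have "?E (\<lambda>w. gfun w powr \<omega> / b powr \<omega>) - 1 = ?E (\<lambda>w. gfun w powr \<omega> / b powr \<omega> - 1)"
        by (simp add: int)
      also have "\<bar>\<dots>\<bar> \<le> ?E (\<lambda>w. \<bar>gfun w powr \<omega> / b powr \<omega> - 1\<bar>)"
        using integral_norm_bound[of ?M "\<lambda>w. gfun w powr \<omega> / b powr \<omega> - 1"] by simp
      finally show ?thesis .
    qed
    have s2: "?E (\<lambda>w. \<bar>gfun w powr \<omega> / b powr \<omega> - 1\<bar>) \<le> ?E (\<lambda>w. \<bar>gfun w - b\<bar> / b)"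
      using assms(2,3) bp gw0 by (intro integral_mono_AE int AE_pmfI powA) auto
    have s3: "?E (\<lambda>w. \<bar>gfun w - b\<bar> / b) = ?E (\<lambda>w. \<bar>gfun w - b\<bar>) / b" by simp
    have s4: "?E (\<lambda>w. \<bar>gfun w - b\<bar>) \<le> ?E (\<lambda>w. \<Sum>k\<in>UNIV. ee (u k) b (w k))"
      unfolding b_def by (intro integral_mono int g_pointwise[OF assms(1)])
    have s5: "?E (\<lambda>w. \<Sum>k\<in>UNIV. ee (u k) b (w k)) \<le> d * (6 * (sqrt (b/n) + 1/n))"
    proof -
      have "?E (\<lambda>w. \<Sum>k\<in>UNIV. ee (u k) b (w k)) = (\<Sum>k\<in>UNIV. ?E (\<lambda>w. ee (u k) b (w k)))"
        by (rule Bochner_Integration.integral_sum) (rule int)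
      also have "\<dots> = (\<Sum>k\<in>UNIV. measure_pmf.expectation (binomial_pmf n (u k)) (\<lambda>s. ee (u k) b (real s / real n)))"
        by (simp add: mu_marg)
      also have "\<dots> \<le> (\<Sum>k\<in>(UNIV::'d set). 6 * (sqrt (b/n) + 1/n))"
      proof (intro sum_mono L2)
        fix k
        show "u k \<in> {0..1}" using u by auto
        show "b \<le> u k" using g_le[of u k] b_def by simp
      qed (use n0 bp in auto)
      also have "\<dots> = d * (6 * (sqrt (b/n) + 1/n))" by (simp add: d_def)
      finally show ?thesis .
    qed
    have s6: "(sqrt (b/n) + 1/n)/b \<le> 2 * real n powr (-(1-\<gamma>)/2)"
      using arithF[OF n _ assms(5)] gu b_def by simp
    have ln1: "1 \<le> ln (real n)" using nr exp_le by (subst ln_ge_iff) auto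
    have d0: "d \<ge> 0" by (simp add: d_def)
    have "\<bar>?E (\<lambda>w. gfun w powr \<omega> / b powr \<omega>) - 1\<bar> \<le> d * (6 * (sqrt (b/n) + 1/n)) / b"
      using s1 s2 s3 s4 s5 bp by (smt (verit) divide_right_mono)
    also have "\<dots> = 6 * d * ((sqrt (b/n) + 1/n)/b)" by simp
    also have "\<dots> \<le> 6 * d * (2 * real n powr (-(1-\<gamma>)/2))"
      using s6 d0 by (intro mult_left_mono) auto
    also have "\<dots> \<le> 6 * d * (2 * real n powr (-(1-\<gamma>)/2)) * ln (real n)"
    proof -
      have "0 \<le> 6 * d * (2 * real n powr (-(1-\<gamma>)/2))" using d0 by simp
      from mult_left_mono[OF ln1 this] show ?thesis by simp
    qed
    also have "\<dots> = (12*d) * (real n powr (-(1 - \<gamma>) / 2) * ln (real n))" by simp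
    finally show ?thesis unfolding b_def .
  qed
  show ?thesis
    by (intro exI[of _ "12*d"] eventually_mono[OF eventually_ge_at_top[of 3]] allI impI main) auto
qed

end
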